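(* Let $T>0$, $C_1>0$, and let $H:(0,1)^n\times\mathbb S(n)\to\mathbb R^n$, $B:(0,1)^n\times\mathbb S(n)\to\mathbb S(n)$ be $C^1$ with $(B(\mu,p),p)\ge(H(\mu,p),\mu)-C_1$ and $H_i(\mu,p)\ge-C_1$ for all $(\mu,p)$ and $i$, and let $g:[0,1]^n\to\mathbb R^n$ satisfy $|g_i|\le C_1$ on $[0,1]^n$. Let $\epsilon>0$, $\mu\in\mathcal P_\epsilon(\mathbb G)$, $t\in[0,T)$, $\lambda\in[0,1]$. Then every classical solution $(\phi,\rho):[t,T]\to\mathbb R^n\times(0,1)^n$ of $$\dot\phi=H(\rho,\lambda\nabla_{\mathbb G}\phi)-\Delta_{\mathbb G}\phi,\quad \dot\rho=\nabla_{\mathbb G}\cdot B(\rho,\lambda\nabla_{\mathbb G}\phi)+\Delta_{\mathbb G}\rho\ \text{ on }(t,T),\quad \phi(T)=g(\rho(T)),\ \rho(t)=\mu,$$ satisfies $$\epsilon\,\Big\|\max_{1\le i\le n}|\lambda\phi_i|\Big\|_{L^\infty(t,T)}\le(5(T-t)+4)C_1.$$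
   Context: $\mathbb G$ is a finite connected simple undirected graph on $\{1,\dots,n\}$ with symmetric edge weights $\omega_{ij}>0$ iff $(i,j)$ is an edge. $\mathbb S(n)$: skew-symmetric matrices with $(m,\tilde m)=\frac12\sum_{(i,j)\in\mathbb E}m^{ij}\tilde m^{ij}$; Euclidean inner product on $\mathbb R^n$. $(\nabla_{\mathbb G}u)^{ij}=\sqrt{\omega_{ij}}(u^i-u^j)$, $(\nabla_{\mathbb G}\cdot m)^i=\sum_{j\ne i}\sqrt{\omega_{ij}}m^{ji}$, $(\Delta_{\mathbb G}u)^i=\sum_j\omega_{ij}(u^j-u^i)$. $\mathcal P_\epsilon(\mathbb G)$: probability vectors with all entries $>\epsilon$. Classical solution: a $C^1$ pair satisfying the system pointwise. *)

theory Defs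
  imports "HOL-Analysis.Analysis"
begin

text \<open>Vertices of the graph are the elements of a finite type 'n (so n = CARD('n)).
  Weights: w i j. Edges are the ordered pairs (i,j) with w i j > 0.\<close>

definition weighted_graph :: "('n::finite \<Rightarrow> 'n \<Rightarrow> real) \<Rightarrow> bool" where
  "weighted_graph w \<longleftrightarrow>
     (\<forall>i j. w i j = w j i) \<and> (\<forall>i j. w i j \<ge> 0) \<and> (\<forall>i. w i i = 0) \<and>
     (\<forall>i j. (i, j) \<in> {(a, b). w a b > 0}\<^sup>*)"

definition skew :: "real^'n^'n \<Rightarrow> bool" where
  "skew m \<longleftrightarrow> (\<forall>i j. m$i$j = - m$j$i)"

definition Sinner :: "('n::finite \<Rightarrow> 'n \<Rightarrow> real) \<Rightarrow> real^'n^'n \<Rightarrow> real^'n^'n \<Rightarrow> real" where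
  "Sinner w m m' = (1/2) * (\<Sum>(i, j) \<in> {(a, b). w a b > 0}. m$i$j * m'$i$j)"

definition ggrad :: "('n::finite \<Rightarrow> 'n \<Rightarrow> real) \<Rightarrow> real^'n \<Rightarrow> real^'n^'n" where
  "ggrad w u = (\<chi> i j. sqrt (w i j) * (u$i - u$j))"

definition gdiv :: "('n::finite \<Rightarrow> 'n \<Rightarrow> real) \<Rightarrow> real^'n^'n \<Rightarrow> real^'n" where
  "gdiv w m = (\<chi> i. \<Sum>j \<in> UNIV - {i}. sqrt (w i j) * m$j$i)"

definition glap :: "('n::finite \<Rightarrow> 'n \<Rightarrow> real) \<Rightarrow> real^'n \<Rightarrow> real^'n" where
  "glap w u = (\<chi> i. \<Sum>j\<in>UNIV. w i j * (u$j - u$i))"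

definition open_cube :: "(real^'n) set" where
  "open_cube = {x. \<forall>i. 0 < x$i \<and> x$i < 1}"

definition closed_cube :: "(real^'n) set" where
  "closed_cube = {x. \<forall>i. 0 \<le> x$i \<and> x$i \<le> 1}"

definition Peps :: "real \<Rightarrow> (real^'n::finite) set" where
  "Peps \<epsilon> = {x. (\<Sum>i\<in>UNIV. x$i) = 1 \<and> (\<forall>i. x$i > \<epsilon>)}"

definition C1_on :: "'a::real_normed_vector set \<Rightarrow> ('a \<Rightarrow> 'b::real_normed_vector) \<Rightarrow> bool" where
  "C1_on S f \<longleftrightarrow> (\<exists>f'. (\<forall>x\<in>S. (f has_derivative blinfun_apply (f' x)) (at x within S))
                      \<and> continuous_on S f')"

definition SDom :: "((real^'n) \<times> (real^'n^'n)) set" where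
  "SDom = {(m, p). m \<in> open_cube \<and> skew p}"

definition classical_solution ::
  "('n::finite \<Rightarrow> 'n \<Rightarrow> real) \<Rightarrow> ((real^'n) \<times> (real^'n^'n) \<Rightarrow> real^'n)
   \<Rightarrow> ((real^'n) \<times> (real^'n^'n) \<Rightarrow> real^'n^'n) \<Rightarrow> (real^'n \<Rightarrow> real^'n) \<Rightarrow> real
   \<Rightarrow> real^'n \<Rightarrow> real \<Rightarrow> real \<Rightarrow> (real \<Rightarrow> real^'n) \<Rightarrow> (real \<Rightarrow> real^'n) \<Rightarrow> bool" where
  "classical_solution w H B g lam \<mu> t T \<phi> \<rho> \<longleftrightarrow>
     (\<exists>\<phi>' \<rho>'.
        continuous_on {t..T} \<phi>' \<and> continuous_on {t..T} \<rho>' \<and>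
        (\<forall>s\<in>{t..T}. (\<phi> has_vector_derivative \<phi>' s) (at s within {t..T})) \<and>
        (\<forall>s\<in>{t..T}. (\<rho> has_vector_derivative \<rho>' s) (at s within {t..T})) \<and>
        (\<forall>s\<in>{t..T}. \<rho> s \<in> open_cube) \<and>
        (\<forall>s\<in>{t<..<T}. \<phi>' s = H (\<rho> s, lam *\<^sub>R ggrad w (\<phi> s)) - glap w (\<phi> s)) \<and>
        (\<forall>s\<in>{t<..<T}. \<rho>' s = gdiv w (B (\<rho> s, lam *\<^sub>R ggrad w (\<phi> s))) + glap w (\<rho> s)) \<and>
        \<phi> T = g (\<rho> T) \<and> \<rho> t = \<mu>)"

end

theory Submission
  imports Defs
begin

lemma wg_sym: "weighted_graph w \<Longrightarrow> w i j = w j i" by (simp add: weighted_graph_def)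
lemma wg_nn: "weighted_graph w \<Longrightarrow> w i j \<ge> 0" by (simp add: weighted_graph_def)
lemma wg_diag: "weighted_graph w \<Longrightarrow> w i i = 0" by (simp add: weighted_graph_def)

lemma ggrad_skew: "weighted_graph w \<Longrightarrow> skew (c *\<^sub>R ggrad w u)"
  unfolding skew_def ggrad_def by (simp add: wg_sym[of w _ _ ] algebra_simps)

lemma sum_swap_neg:
  fixes f :: "'n::finite \<Rightarrow> 'n \<Rightarrow> real"
  assumes "\<And>i j. f i j = - f j i"
  shows "(\<Sum>i\<in>UNIV. \<Sum>j\<in>UNIV. f i j) = 0"
proof -
  have "(\<Sum>i\<in>UNIV. \<Sum>j\<in>UNIV. f i j) = (\<Sum>j\<in>UNIV. \<Sum>i\<in>UNIV. f i j)" by (rule sum.swap)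
  also have "\<dots> = (\<Sum>j\<in>UNIV. \<Sum>i\<in>UNIV. - f j i)" by (intro sum.cong refl assms)
  also have "\<dots> = - (\<Sum>j\<in>UNIV. \<Sum>i\<in>UNIV. f j i)" by (simp add: sum_negf)
  finally show ?thesis by simp
qed

lemma glap_sum: "weighted_graph w \<Longrightarrow> (\<Sum>i\<in>UNIV. glap w u $ i) = 0"
  unfolding glap_def
proof -
  assume G: "weighted_graph w"
  show "(\<Sum>i\<in>UNIV. (\<chi> i. \<Sum>j\<in>UNIV. w i j * (u $ j - u $ i)) $ i) = 0"
    by simp (rule sum_swap_neg, metis wg_sym[OF G] minus_diff_eq mult_minus_right)
qed

lemma gdiv_full: "weighted_graph w \<Longrightarrow> gdiv w M $ i = (\<Sum>j\<in>UNIV. sqrt (w i j) * M$j$i)"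
proof -
  assume G: "weighted_graph w"
  have "(\<Sum>j\<in>UNIV. sqrt (w i j) * M$j$i) = sqrt (w i i) * M$i$i + (\<Sum>j \<in> UNIV - {i}. sqrt (w i j) * M$j$i)"
    by (simp add: sum.remove)
  then show ?thesis by (simp add: gdiv_def wg_diag[OF G])
qed

lemma gdiv_sum: "weighted_graph w \<Longrightarrow> skew M \<Longrightarrow> (\<Sum>i\<in>UNIV. gdiv w M $ i) = 0"
proof -
  assume G: "weighted_graph w" and M: "skew M"
  have sk: "\<And>i j. M$i$j = - M$j$i" using M unfolding skew_def by blast
  show ?thesis unfolding gdiv_full[OF G]
    by (rule sum_swap_neg) (metis sk wg_sym[OF G] mult_minus_right)
qed

lemma glap_symm: "weighted_graph w \<Longrightarrow>
   (\<Sum>i\<in>UNIV. u$i * glap w v $ i) = (\<Sum>i\<in>UNIV. v$i * glap w u $ i)"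
proof -
  assume G: "weighted_graph w"
  have "(\<Sum>i\<in>UNIV. u$i * glap w v $ i) - (\<Sum>i\<in>UNIV. v$i * glap w u $ i)
     = (\<Sum>i\<in>UNIV. \<Sum>j\<in>UNIV. w i j * (u$i * v$j - v$i * u$j))"
    by (simp add: glap_def sum_distrib_left sum_subtractf[symmetric] algebra_simps)
  also have "\<dots> = 0" by (rule sum_swap_neg) (simp add: wg_sym[OF G] algebra_simps)
  finally show ?thesis by simp
qed

lemma Sinner_grad: assumes G: "weighted_graph w" and M: "skew M"
  shows "Sinner w M (c *\<^sub>R ggrad w u) = - c * (\<Sum>i\<in>UNIV. u$i * gdiv w M $ i)"
proof -
  have "Sinner w M (c *\<^sub>R ggrad w u) = (1/2) * (\<Sum>(i,j)\<in>UNIV. M$i$j * (c * (sqrt (w i j) * (u$i - u$j))))"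
  proof -
    have "(\<Sum>(i,j)\<in>{(a, b). 0 < w a b}. M$i$j * (c *\<^sub>R ggrad w u)$i$j)
        = (\<Sum>(i,j)\<in>{(a, b). 0 < w a b}. M$i$j * (c * (sqrt (w i j) * (u$i - u$j))))"
      by (simp add: ggrad_def)
    also have "\<dots> = (\<Sum>(i,j)\<in>UNIV. M$i$j * (c * (sqrt (w i j) * (u$i - u$j))))"
    proof (rule sum.mono_neutral_left)
      show "\<forall>x\<in>UNIV - {(a, b). 0 < w a b}. (case x of (i, j) \<Rightarrow> M $ i $ j * (c * (sqrt (w i j) * (u $ i - u $ j)))) = 0"
        using wg_nn[OF G] by (auto simp: less_eq_real_def) (metis less_eq_real_def)
    qed auto
    finally show ?thesis unfolding Sinner_def by simp
  qed
  also have "(\<Sum>(i,j)\<in>UNIV. M$i$j * (c * (sqrt (w i j) * (u$i - u$j)))) =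
     (\<Sum>i\<in>UNIV. \<Sum>j\<in>UNIV. M$i$j * (c * (sqrt (w i j) * (u$i - u$j))))"
    by (simp add: sum.cartesian_product UNIV_Times_UNIV[symmetric] del: UNIV_Times_UNIV)
  also have "\<dots> = (\<Sum>i\<in>UNIV. \<Sum>j\<in>UNIV. c * (M$i$j * sqrt (w i j) * u$i))
       - (\<Sum>i\<in>UNIV. \<Sum>j\<in>UNIV. c * (M$i$j * sqrt (w i j) * u$j))"
    by (simp add: sum_subtractf[symmetric] algebra_simps)
  also have "(\<Sum>i\<in>UNIV. \<Sum>j\<in>UNIV. c * (M$i$j * sqrt (w i j) * u$i))
      = - c * (\<Sum>i\<in>UNIV. u$i * gdiv w M $ i)"
  proof -
    have sk: "\<And>i j. M$i$j = - M$j$i" using M unfolding skew_def by blast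
    have "(\<Sum>i\<in>UNIV. \<Sum>j\<in>UNIV. c * (M$i$j * sqrt (w i j) * u$i))
        = (\<Sum>i\<in>UNIV. \<Sum>j\<in>UNIV. - c * (u$i * (sqrt (w i j) * M$j$i)))"
      by (rule sum.cong[OF refl], rule sum.cong[OF refl]) (subst sk, simp)
    then show ?thesis by (simp add: gdiv_full[OF G] sum_distrib_left)
  qed
  also have "(\<Sum>i\<in>UNIV. \<Sum>j\<in>UNIV. c * (M$i$j * sqrt (w i j) * u$j))
      = c * (\<Sum>i\<in>UNIV. u$i * gdiv w M $ i)"
  proof -
    have "(\<Sum>i\<in>UNIV. \<Sum>j\<in>UNIV. c * (M$i$j * sqrt (w i j) * u$j))
        = (\<Sum>j\<in>UNIV. \<Sum>i\<in>UNIV. c * (M$i$j * sqrt (w i j) * u$j))" by (rule sum.swap)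
    also have "\<dots> = (\<Sum>j\<in>UNIV. \<Sum>i\<in>UNIV. c * (u$j * (sqrt (w j i) * M$i$j)))"
      by (rule sum.cong[OF refl])+ (metis wg_sym[OF G] mult.commute mult.left_commute)
    finally show ?thesis by (simp add: gdiv_full[OF G] sum_distrib_left)
  qed
  finally show ?thesis by simp
qed


lemma vd_comp:
  fixes f :: "real \<Rightarrow> real^'n"
  assumes "(f has_vector_derivative f') F"
  shows "((\<lambda>x. f x $ i) has_real_derivative f' $ i) F"
  using bounded_linear.has_vector_derivative[OF bounded_linear_vec_nth assms]
  by (simp add: has_real_derivative_iff_has_vector_derivative)

lemma cont_left_end:
  fixes f :: "real \<Rightarrow> real"
  assumes cf: "continuous_on {a..b} f" and ab: "a < b" and le: "\<And>x. a < x \<Longrightarrow> x \<le> b \<Longrightarrow> f x \<le> c"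
  shows "f a \<le> c"
proof (rule ccontr)
  assume "\<not> f a \<le> c"
  then have e: "f a - c > 0" by simp
  have "a \<in> {a..b}" using ab by simp
  then obtain d where d: "d>0" "\<forall>x'\<in>{a..b}. dist x' a < d \<longrightarrow> dist (f x') (f a) < f a - c"
    using cf e unfolding continuous_on_iff by blast
  define x where "x = min b (a + d/2)"
  have ax: "a < x" "x \<le> b" using d ab by (auto simp: x_def)
  moreover have "dist x a < d" using d ab ax by (auto simp: x_def dist_real_def)
  ultimately have "dist (f x) (f a) < f a - c" using d(2) by auto
  with le[OF ax] show False by (simp add: dist_real_def)
qed

lemma incr_deriv:
  fixes f f' :: "real \<Rightarrow> real"
  assumes "a \<le> b" "\<And>x. a < x \<Longrightarrow> x < b \<Longrightarrow> (f has_real_derivative f' x) (at x)"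
    "\<And>x. a < x \<Longrightarrow> x < b \<Longrightarrow> f' x \<ge> 0" "continuous_on {a..b} f"
  shows "f a \<le> f b"
  using assms by (intro DERIV_nonneg_imp_increasing_open[of a b f]) auto


theorem proposition3p3:
  fixes w :: "'n::finite \<Rightarrow> 'n \<Rightarrow> real"
    and H :: "(real^'n) \<times> (real^'n^'n) \<Rightarrow> real^'n"
    and B :: "(real^'n) \<times> (real^'n^'n) \<Rightarrow> real^'n^'n"
    and g :: "real^'n \<Rightarrow> real^'n"
    and T C1 \<epsilon> t lam :: real and \<mu> :: "real^'n"
    and \<phi> \<rho> :: "real \<Rightarrow> real^'n"
  assumes G: "weighted_graph w"
    and T: "T > 0" and C1: "C1 > 0"
    and H_C1: "C1_on SDom H" and B_C1: "C1_on SDom B"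
    and B_skew: "\<forall>x\<in>SDom. skew (B x)"
    and HB: "\<forall>m p. (m, p) \<in> SDom \<longrightarrow> Sinner w (B (m, p)) p \<ge> H (m, p) \<bullet> m - C1"
    and Hlow: "\<forall>m p i. (m, p) \<in> SDom \<longrightarrow> H (m, p) $ i \<ge> - C1"
    and gb: "\<forall>x\<in>closed_cube. \<forall>i. \<bar>g x $ i\<bar> \<le> C1"
    and eps: "\<epsilon> > 0" and mu: "\<mu> \<in> Peps \<epsilon>"
    and t: "0 \<le> t" "t < T" and lam: "0 \<le> lam" "lam \<le> 1"
    and sol: "classical_solution w H B g lam \<mu> t T \<phi> \<rho>"
  shows "\<forall>s\<in>{t<..<T}. \<epsilon> * (MAX i\<in>UNIV. \<bar>lam * \<phi> s $ i\<bar>) \<le> (5 * (T - t) + 4) * C1"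
proof (cases "lam = 0")
  case True
  then show ?thesis using C1 t by simp
next
  case False
  then have lam0: "lam > 0" using lam by simp
  obtain \<phi>' \<rho>' where
    dphi: "\<forall>s\<in>{t..T}. (\<phi> has_vector_derivative \<phi>' s) (at s within {t..T})" and
    drho: "\<forall>s\<in>{t..T}. (\<rho> has_vector_derivative \<rho>' s) (at s within {t..T})" and
    rin: "\<forall>s\<in>{t..T}. \<rho> s \<in> open_cube" and
    ephi: "\<forall>s\<in>{t<..<T}. \<phi>' s = H (\<rho> s, lam *\<^sub>R ggrad w (\<phi> s)) - glap w (\<phi> s)" and
    erho: "\<forall>s\<in>{t<..<T}. \<rho>' s = gdiv w (B (\<rho> s, lam *\<^sub>R ggrad w (\<phi> s))) + glap w (\<rho> s)" and
    fT: "\<phi> T = g (\<rho> T)" and r0: "\<rho> t = \<mu>"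
    using sol unfolding classical_solution_def by blast
  define p where "p s = lam *\<^sub>R ggrad w (\<phi> s)" for s
  have inS: "(\<rho> s, p s) \<in> SDom" if "s \<in> {t..T}" for s
    using rin that ggrad_skew[OF G] by (auto simp: SDom_def p_def)
  have Bsk: "skew (B (\<rho> s, p s))" if "s \<in> {t..T}" for s using B_skew inS[OF that] by blast
  have Dphi: "((\<lambda>x. \<phi> x $ j) has_real_derivative \<phi>' s $ j) (at s)" if s: "s \<in> {t<..<T}" for s j
  proof -
    have s1: "s \<in> {t..T}" using s by auto
    have "(\<phi> has_vector_derivative \<phi>' s) (at s within {t..T})" using dphi s1 by blast
    then have "(\<phi> has_vector_derivative \<phi>' s) (at s)" using s at_within_Icc_at[of t s T] by simp
    then show ?thesis by (rule vd_comp)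
  qed
  have Drho: "((\<lambda>x. \<rho> x $ j) has_real_derivative \<rho>' s $ j) (at s)" if s: "s \<in> {t<..<T}" for s j
  proof -
    have s1: "s \<in> {t..T}" using s by auto
    have "(\<rho> has_vector_derivative \<rho>' s) (at s within {t..T})" using drho s1 by blast
    then have "(\<rho> has_vector_derivative \<rho>' s) (at s)" using s at_within_Icc_at[of t s T] by simp
    then show ?thesis by (rule vd_comp)
  qed
  have Cphi: "continuous_on {t..T} (\<lambda>x. \<phi> x $ j)" for j
    unfolding continuous_on_eq_continuous_within
  proof
    fix s assume "s \<in> {t..T}"
    then have "(\<phi> has_vector_derivative \<phi>' s) (at s within {t..T})" using dphi by blast
    then have "((\<lambda>x. \<phi> x $ j) has_real_derivative \<phi>' s $ j) (at s within {t..T})" by (rule vd_comp)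
    then show "continuous (at s within {t..T}) (\<lambda>x. \<phi> x $ j)"
      unfolding has_real_derivative_iff_has_vector_derivative by (rule has_vector_derivative_continuous)
  qed
  have Crho: "continuous_on {t..T} (\<lambda>x. \<rho> x $ j)" for j
    unfolding continuous_on_eq_continuous_within
  proof
    fix s assume "s \<in> {t..T}"
    then have "(\<rho> has_vector_derivative \<rho>' s) (at s within {t..T})" using drho by blast
    then have "((\<lambda>x. \<rho> x $ j) has_real_derivative \<rho>' s $ j) (at s within {t..T})" by (rule vd_comp)
    then show "continuous (at s within {t..T}) (\<lambda>x. \<rho> x $ j)"
      unfolding has_real_derivative_iff_has_vector_derivative by (rule has_vector_derivative_continuous)
  qed
  have rpos: "\<rho> s $ j > 0" "\<rho> s $ j < 1" if "s \<in> {t..T}" for s j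
    using rin that by (auto simp: open_cube_def)
  have mu1: "(\<Sum>j\<in>UNIV. \<mu> $ j) = 1" and mueps: "\<And>j. \<mu> $ j > \<epsilon>" using mu by (auto simp: Peps_def)
  have R1: "(\<Sum>j\<in>UNIV. \<rho> s $ j) = 1" if s: "s \<in> {t..T}" for s
  proof -
    have D: "((\<lambda>x. \<Sum>j\<in>UNIV. \<rho> x $ j) has_real_derivative 0) (at x)" if x: "x \<in> {t<..<T}" for x
    proof -
      have "((\<lambda>x. \<Sum>j\<in>UNIV. \<rho> x $ j) has_real_derivative (\<Sum>j\<in>UNIV. \<rho>' x $ j)) (at x)"
        by (rule DERIV_sum) (rule Drho[OF x])
      moreover have "(\<Sum>j\<in>UNIV. \<rho>' x $ j) = 0"
      proof -
        have x1: "x \<in> {t..T}" using x by auto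
        have "\<rho>' x = gdiv w (B (\<rho> x, p x)) + glap w (\<rho> x)" using erho x by (simp add: p_def)
        then have "(\<Sum>j\<in>UNIV. \<rho>' x $ j) = (\<Sum>j\<in>UNIV. gdiv w (B (\<rho> x, p x)) $ j) + (\<Sum>j\<in>UNIV. glap w (\<rho> x) $ j)"
          by (simp add: sum.distrib)
        then show ?thesis using gdiv_sum[OF G Bsk[OF x1]] glap_sum[OF G] by simp
      qed
      ultimately show ?thesis by simp
    qed
    have D2: "((\<lambda>x. - (\<Sum>j\<in>UNIV. \<rho> x $ j)) has_real_derivative 0) (at x)" if x: "x \<in> {t<..<T}" for x
      using DERIV_minus[OF D[OF x]] by simp
    have C: "continuous_on {t..s} (\<lambda>x. \<Sum>j\<in>UNIV. \<rho> x $ j)"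
      using s by (intro continuous_on_sum continuous_on_subset[OF Crho]) auto
    have C2: "continuous_on {t..s} (\<lambda>x. - (\<Sum>j\<in>UNIV. \<rho> x $ j))"
      using C by (rule continuous_on_minus)
    have "(\<Sum>j\<in>UNIV. \<rho> t $ j) \<le> (\<Sum>j\<in>UNIV. \<rho> s $ j)"
      by (rule incr_deriv[where f'="\<lambda>_. 0", OF _ D _ C]) (use s in auto)
    moreover have "(\<lambda>x. - (\<Sum>j\<in>UNIV. \<rho> x $ j)) t \<le> (\<lambda>x. - (\<Sum>j\<in>UNIV. \<rho> x $ j)) s"
      by (rule incr_deriv[where f'="\<lambda>_. 0", OF _ D2 _ C2]) (use s in auto)
    ultimately show ?thesis using r0 mu1 by simp
  qed
  have gT: "lam * \<phi> T $ j \<le> lam * C1" "lam * \<phi> T $ j \<ge> - lam * C1" for j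
  proof -
    have "\<rho> T \<in> closed_cube" using rin t by (auto simp: open_cube_def closed_cube_def less_imp_le)
    then have "\<bar>g (\<rho> T) $ j\<bar> \<le> C1" using gb by blast
    then have "\<phi> T $ j \<le> C1" "\<phi> T $ j \<ge> - C1" using fT by auto
    then have "lam * \<phi> T $ j \<le> lam * C1" "lam * (- C1) \<le> lam * \<phi> T $ j"
      using lam0 by (intro mult_left_mono, simp, simp)+
    then show "lam * \<phi> T $ j \<le> lam * C1" "lam * \<phi> T $ j \<ge> - lam * C1" by simp_all
  qed
  have Hl: "H (\<rho> s, p s) $ j \<ge> - C1" if "s \<in> {t..T}" for s j using Hlow inS[OF that] by blast
  have U: "lam * \<phi> s $ j \<le> lam * C1 * (1 + T - s)" if s: "s \<in> {t..T}" for s j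
  proof -
    have Ud: "lam * \<phi> s $ j \<le> lam * C1 * (1 + T - s) + \<delta> * (1 + T - s)" if d: "\<delta> > 0" for \<delta>
    proof -
      define V where "V j x = lam * \<phi> x $ j - (lam * C1 + \<delta>) * (1 + T - x)" for j x
      have CV: "continuous_on {t..T} (V j)" for j
        unfolding V_def by (intro continuous_intros Cphi)
      have VT: "V j T < 0" for j using gT(1)[of j] d by (simp add: V_def)
      have DV: "(V j has_real_derivative (lam * \<phi>' x $ j + (lam * C1 + \<delta>))) (at x)" if "x \<in> {t<..<T}" for x j
        unfolding V_def using Dphi[OF that, of j] by (auto intro!: derivative_eq_intros)
      have A: "V j x < 0" if x: "x \<in> {t<..T}" for x j
      proof (rule ccontr)
        assume "\<not> V j x < 0"
        then have x0: "V j x \<ge> 0" by simp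
        define S where "S = (\<Union>k. {y \<in> {x..T}. (\<lambda>_. 0) y \<le> V k y})"
        have "closed {y \<in> {x..T}. (\<lambda>_. 0) y \<le> V k y}" for k
          by (rule continuous_on_closed_Collect_le) (use x in \<open>auto intro: continuous_on_subset[OF CV]\<close>)
        then have cS: "closed S" unfolding S_def by (auto intro!: closed_UN)
        have xS: "x \<in> S" using x x0 by (auto simp: S_def)
        have bS: "bdd_above S" unfolding S_def by (rule bdd_aboveI[of _ T]) auto
        define ss where "ss = Sup S"
        have ssS: "ss \<in> S" unfolding ss_def using closed_contains_Sup[OF _ bS cS] xS by blast
        have ub: "y \<le> ss" if "y \<in> S" for y unfolding ss_def using cSup_upper[OF that bS] .
        have ss1: "x \<le> ss" "ss \<le> T" using ssS by (auto simp: S_def)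
        obtain k where k: "0 \<le> V k ss" using ssS by (auto simp: S_def)
        have ssT: "ss \<noteq> T" using k VT[of k] by auto
        have ssI: "ss \<in> {t<..<T}" using ss1 ssT x by auto
        have fin: "finite (range (\<lambda>k. V k ss))" by simp
        obtain i where i: "V i ss = Max (range (\<lambda>k. V k ss))"
        proof -
          have "Max (range (\<lambda>k. V k ss)) \<in> range (\<lambda>k. V k ss)" by (rule Max_in[OF fin]) simp
          then show ?thesis using that by (metis imageE)
        qed
        have imax: "V k' ss \<le> V i ss" for k' using i Max_ge[OF fin] by auto
        have Vi0: "V i ss \<ge> 0" using imax[of k] k by simp
        have ord: "\<phi> ss $ k' \<le> \<phi> ss $ i" for k'
          using imax[of k'] lam0 by (simp add: V_def)
        have gl: "glap w (\<phi> ss) $ i \<le> 0"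
          unfolding glap_def using ord wg_nn[OF G]
          by (simp add: sum_nonpos mult_nonneg_nonpos)
        have ssI2: "ss \<in> {t..T}" using ssI by auto
        have eq: "\<phi>' ss $ i = H (\<rho> ss, p ss) $ i - glap w (\<phi> ss) $ i"
          using ephi ssI by (simp add: p_def)
        have "H (\<rho> ss, p ss) $ i - glap w (\<phi> ss) $ i \<ge> - C1" using Hl[OF ssI2, of i] gl by linarith
        then have "lam * \<phi>' ss $ i \<ge> lam * (- C1)" unfolding eq using lam0 by (intro mult_left_mono) auto
        then have pos: "lam * \<phi>' ss $ i + (lam * C1 + \<delta>) > 0" using d by simp
        obtain dd where dd: "dd > 0" "\<And>h. h > 0 \<Longrightarrow> h < dd \<Longrightarrow> V i ss < V i (ss + h)"
          using DERIV_pos_inc_right[OF DV[OF ssI] pos] by blast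
        define h where "h = min (dd/2) ((T - ss)/2)"
        have sT: "ss < T" using ss1 ssT by auto
        have h1: "h \<le> (T - ss)/2" "h \<le> dd/2" unfolding h_def by (rule min.cobounded2, rule min.cobounded1)
        have h: "h > 0" "h < dd" "ss + h \<le> T" using h1 dd sT by (auto simp: h_def)
        have "V i (ss + h) > 0" using dd(2)[OF h(1,2)] Vi0 by simp
        then have "ss + h \<in> S" using h ss1 unfolding S_def by (auto intro!: exI[of _ i] less_imp_le)
        then show False using ub h by fastforce
      qed
      have "V j s \<le> 0"
      proof (cases "s = t")
        case True
        show ?thesis unfolding True by (rule cont_left_end[OF CV t(2)]) (use A in \<open>auto simp: less_imp_le\<close>)
      next
        case False
        then show ?thesis using A[of s j] s by auto
      qed
      then show ?thesis by (simp add: V_def algebra_simps)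
    qed
    have pos: "1 + T - s > 0" using s by auto
    show ?thesis
    proof (rule field_le_epsilon)
      fix e :: real assume e: "e > 0"
      have "lam * \<phi> s $ j \<le> lam * C1 * (1 + T - s) + (e / (1 + T - s)) * (1 + T - s)"
        using Ud[of "e / (1 + T - s)"] e pos by simp
      then show "lam * \<phi> s $ j \<le> lam * C1 * (1 + T - s) + e" using pos by simp
    qed
  qed
  define n where "n = real CARD('n)"
  have sumc: "(\<Sum>j\<in>(UNIV::'n set). c) = n * c" for c by (simp add: n_def)
  have F: "(\<Sum>j\<in>UNIV. lam * \<phi> t $ j) - n * lam * C1 * (s - t) \<le> (\<Sum>j\<in>UNIV. lam * \<phi> s $ j)"
    if s: "s \<in> {t<..<T}" for s
  proof -
    define f where "f x = (\<Sum>j\<in>UNIV. lam * \<phi> x $ j) + n * lam * C1 * x" for x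
    have D: "(f has_real_derivative (\<Sum>j\<in>UNIV. lam * \<phi>' x $ j) + n * lam * C1) (at x)"
      if x: "x \<in> {t<..<T}" for x
    proof -
      have D1: "((\<lambda>x. \<Sum>j\<in>UNIV. lam * \<phi> x $ j) has_real_derivative (\<Sum>j\<in>UNIV. lam * \<phi>' x $ j)) (at x)"
        by (rule DERIV_sum, rule DERIV_cmult, rule Dphi[OF x])
      have D2: "((\<lambda>x. n * lam * C1 * x) has_real_derivative n * lam * C1) (at x)"
        by (auto intro!: derivative_eq_intros)
      show ?thesis unfolding f_def by (rule DERIV_add[OF D1 D2])
    qed
    have N: "(\<Sum>j\<in>UNIV. lam * \<phi>' x $ j) + n * lam * C1 \<ge> 0" if x: "x \<in> {t<..<T}" for x
    proof -
      have x1: "x \<in> {t..T}" using x by auto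
      have "(\<Sum>j\<in>UNIV. \<phi>' x $ j) = (\<Sum>j\<in>UNIV. H (\<rho> x, p x) $ j) - (\<Sum>j\<in>UNIV. glap w (\<phi> x) $ j)"
        using ephi x by (simp add: p_def sum_subtractf)
      also have "\<dots> = (\<Sum>j\<in>UNIV. H (\<rho> x, p x) $ j)" using glap_sum[OF G] by simp
      finally have e: "(\<Sum>j\<in>UNIV. \<phi>' x $ j) = (\<Sum>j\<in>UNIV. H (\<rho> x, p x) $ j)" .
      have "(\<Sum>j\<in>UNIV. H (\<rho> x, p x) $ j) \<ge> (\<Sum>j\<in>(UNIV::'n set). - C1)"
        by (rule sum_mono) (rule Hl[OF x1])
      then have "(\<Sum>j\<in>UNIV. \<phi>' x $ j) \<ge> - (n * C1)" using e by (simp add: n_def)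
      then have "lam * (\<Sum>j\<in>UNIV. \<phi>' x $ j) \<ge> lam * (- (n * C1))" using lam0 by (intro mult_left_mono) auto
      then show ?thesis by (simp add: sum_distrib_left algebra_simps)
    qed
    have C: "continuous_on {t..s} f" unfolding f_def using s
      by (intro continuous_intros continuous_on_subset[OF Cphi]) auto
    have "f t \<le> f s" by (rule incr_deriv[OF _ D N C]) (use s in auto)
    then show ?thesis by (simp add: f_def algebra_simps)
  qed
  have P: "(\<Sum>j\<in>UNIV. lam * \<phi> T $ j * \<rho> T $ j) - (\<Sum>j\<in>UNIV. lam * \<phi> t $ j * \<rho> t $ j) \<le> 2 * C1 * (T - t)"
  proof -
    define f where "f x = 2 * C1 * x - (\<Sum>j\<in>UNIV. lam * \<phi> x $ j * \<rho> x $ j)" for x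
    define d where "d x = (\<Sum>j\<in>UNIV. lam * \<phi>' x $ j * \<rho> x $ j + \<rho>' x $ j * (lam * \<phi> x $ j))" for x
    have D: "(f has_real_derivative 2 * C1 - d x) (at x)" if x: "x \<in> {t<..<T}" for x
    proof -
      have D1: "((\<lambda>x. \<Sum>j\<in>UNIV. lam * \<phi> x $ j * \<rho> x $ j) has_real_derivative d x) (at x)"
        unfolding d_def by (rule DERIV_sum, rule DERIV_mult[OF DERIV_cmult[OF Dphi[OF x]] Drho[OF x]])
      have D2: "((\<lambda>x. 2 * C1 * x) has_real_derivative 2 * C1) (at x)"
        by (auto intro!: derivative_eq_intros)
      show ?thesis unfolding f_def by (rule DERIV_diff[OF D2 D1])
    qed
    have N: "2 * C1 - d x \<ge> 0" if x: "x \<in> {t<..<T}" for x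
    proof -
      have x1: "x \<in> {t..T}" using x by auto
      define Hv where "Hv = H (\<rho> x, p x)"
      define Bv where "Bv = B (\<rho> x, p x)"
      have eph: "\<phi>' x $ j = Hv $ j - glap w (\<phi> x) $ j" for j using ephi x by (simp add: Hv_def p_def)
      have erh: "\<rho>' x $ j = gdiv w Bv $ j + glap w (\<rho> x) $ j" for j using erho x by (simp add: Bv_def p_def)
      have pt: "lam * \<phi>' x $ j * \<rho> x $ j + \<rho>' x $ j * (lam * \<phi> x $ j) =
         lam * (Hv $ j * \<rho> x $ j - \<rho> x $ j * glap w (\<phi> x) $ j + \<phi> x $ j * gdiv w Bv $ j + \<phi> x $ j * glap w (\<rho> x) $ j)" for j
        unfolding eph erh by (simp add: algebra_simps)
      have "d x = lam * ((\<Sum>j\<in>UNIV. Hv $ j * \<rho> x $ j) - (\<Sum>j\<in>UNIV. \<rho> x $ j * glap w (\<phi> x) $ j)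
          + (\<Sum>j\<in>UNIV. \<phi> x $ j * gdiv w Bv $ j) + (\<Sum>j\<in>UNIV. \<phi> x $ j * glap w (\<rho> x) $ j))"
        unfolding d_def pt by (simp add: sum_distrib_left[symmetric] sum.distrib sum_subtractf)
      also have "\<dots> = lam * (\<Sum>j\<in>UNIV. Hv $ j * \<rho> x $ j) - Sinner w Bv (p x)"
        using glap_symm[OF G, of "\<phi> x" "\<rho> x"] Sinner_grad[OF G, of Bv lam "\<phi> x"] Bsk[OF x1]
        by (simp add: Bv_def p_def algebra_simps)
      finally have dx: "d x = lam * (\<Sum>j\<in>UNIV. Hv $ j * \<rho> x $ j) - Sinner w Bv (p x)" .
      have hb: "Sinner w Bv (p x) \<ge> (\<Sum>j\<in>UNIV. Hv $ j * \<rho> x $ j) - C1"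
        using HB inS[OF x1] by (simp add: Bv_def Hv_def inner_vec_def)
      have "(\<Sum>j\<in>UNIV. Hv $ j * \<rho> x $ j) \<ge> (\<Sum>j\<in>UNIV. (- C1) * \<rho> x $ j)"
        by (rule sum_mono, rule mult_right_mono) (use Hl[OF x1] rpos[OF x1] in \<open>auto simp: Hv_def less_imp_le\<close>)
      also have "(\<Sum>j\<in>UNIV. (- C1) * \<rho> x $ j) = - C1" using R1[OF x1] by (simp add: sum_negf sum_distrib_left[symmetric])
      finally have hl: "(\<Sum>j\<in>UNIV. Hv $ j * \<rho> x $ j) \<ge> - C1" .
      have "(1 - lam) * (\<Sum>j\<in>UNIV. Hv $ j * \<rho> x $ j) \<ge> (1 - lam) * (- C1)"
        using lam hl by (intro mult_left_mono) auto
      moreover have "(1 - lam) * C1 \<le> C1" using lam C1 by (simp add: algebra_simps)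
      ultimately show ?thesis using dx hb by (simp add: algebra_simps)
    qed
    have C: "continuous_on {t..T} f" unfolding f_def
      by (intro continuous_intros Cphi Crho)
    have "f t \<le> f T" by (rule incr_deriv[OF _ D N C]) (use t in auto)
    then show ?thesis by (simp add: f_def algebra_simps)
  qed
  define Ux where "Ux x = lam * C1 * (1 + T - x)" for x
  define K where "K = C1 * (2 + 3 * (T - t))"
  have Tt: "t \<in> {t..T}" "T \<in> {t..T}" using t by auto
  have PT: "(\<Sum>j\<in>UNIV. lam * \<phi> T $ j * \<rho> T $ j) \<ge> - (lam * C1)"
  proof -
    have "(\<Sum>j\<in>UNIV. lam * \<phi> T $ j * \<rho> T $ j) \<ge> (\<Sum>j\<in>UNIV. (- (lam * C1)) * \<rho> T $ j)"
      by (rule sum_mono, rule mult_right_mono) (use gT(2) rpos[OF Tt(2)] in \<open>auto simp: less_imp_le\<close>)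
    also have "(\<Sum>j\<in>UNIV. (- (lam * C1)) * \<rho> T $ j) = - (lam * C1)"
      using R1[OF Tt(2)] by (simp only: sum_distrib_left[symmetric])
    finally show ?thesis .
  qed
  have Pt: "(\<Sum>j\<in>UNIV. lam * \<phi> t $ j * \<mu> $ j) \<ge> - (lam * C1) - 2 * C1 * (T - t)"
    using P PT r0 by simp
  have lamC: "lam * C1 \<le> C1" "lam * C1 * (1 + T - t) \<le> C1 * (1 + T - t)" using lam C1 t
    by (auto intro!: mult_right_mono simp: mult_le_cancel_right1)
  have bsum: "\<epsilon> * (\<Sum>j\<in>UNIV. lam * \<phi> t $ j - Ux t) \<ge> - K"
  proof -
    have "\<epsilon> * (\<Sum>j\<in>UNIV. lam * \<phi> t $ j - Ux t) = (\<Sum>j\<in>UNIV. \<epsilon> * (lam * \<phi> t $ j - Ux t))"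
      by (simp add: sum_distrib_left)
    also have "\<dots> \<ge> (\<Sum>j\<in>UNIV. \<mu> $ j * (lam * \<phi> t $ j - Ux t))"
    proof (rule sum_mono)
      fix j :: 'n
      have "lam * \<phi> t $ j - Ux t \<le> 0" using U[OF Tt(1), of j] by (simp add: Ux_def)
      moreover have "\<mu> $ j - \<epsilon> \<ge> 0" using mueps[of j] by simp
      ultimately have "(\<mu> $ j - \<epsilon>) * (lam * \<phi> t $ j - Ux t) \<le> 0" by (simp add: mult_nonneg_nonpos)
      then show "\<mu> $ j * (lam * \<phi> t $ j - Ux t) \<le> \<epsilon> * (lam * \<phi> t $ j - Ux t)" by (simp add: algebra_simps)
    qed
    finally have "\<epsilon> * (\<Sum>j\<in>UNIV. lam * \<phi> t $ j - Ux t) \<ge> (\<Sum>j\<in>UNIV. \<mu> $ j * (lam * \<phi> t $ j - Ux t))" .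
    moreover have "(\<Sum>j\<in>UNIV. \<mu> $ j * (lam * \<phi> t $ j - Ux t)) = (\<Sum>j\<in>UNIV. lam * \<phi> t $ j * \<mu> $ j) - Ux t * (\<Sum>j\<in>UNIV. \<mu> $ j)"
      by (simp add: algebra_simps sum_subtractf sum_distrib_left)
    moreover have "Ux t \<le> C1 + C1 * T - C1 * t" using lamC(2) by (simp add: Ux_def algebra_simps)
    moreover have "K = 2 * C1 + 3 * (C1 * T) - 3 * (C1 * t)" by (simp add: K_def algebra_simps)
    moreover have "2 * C1 * (T - t) = 2 * (C1 * T) - 2 * (C1 * t)" by (simp add: algebra_simps)
    ultimately show ?thesis using Pt mu1 lamC(1) by simp
  qed
  have eps1: "\<epsilon> \<le> 1"
  proof -
    obtain j :: 'n where True by simp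
    have "\<mu> $ j \<le> (\<Sum>k\<in>UNIV. \<mu> $ k)"
      by (rule member_le_sum) (use mueps eps in \<open>auto intro: less_imp_le less_trans\<close>)
    then show ?thesis using mueps[of j] mu1 by simp
  qed
  have main: "\<epsilon> * \<bar>lam * \<phi> s $ i\<bar> \<le> K" if s: "s \<in> {t<..<T}" for s i
  proof -
    have s1: "s \<in> {t..T}" using s by auto
    define a where "a j = lam * \<phi> s $ j - Ux s" for j
    have an: "a j \<le> 0" for j using U[OF s1, of j] by (simp add: a_def Ux_def)
    have "(\<Sum>j\<in>UNIV. a j) = a i + (\<Sum>j\<in>UNIV - {i}. a j)" by (simp add: sum.remove)
    moreover have "(\<Sum>j\<in>UNIV - {i}. a j) \<le> 0" by (rule sum_nonpos) (use an in auto)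
    ultimately have ai: "a i \<ge> (\<Sum>j\<in>UNIV. a j)" by simp
    have "(\<Sum>j\<in>UNIV. a j) = (\<Sum>j\<in>UNIV. lam * \<phi> s $ j) - n * Ux s"
      by (simp add: a_def sum_subtractf n_def)
    also have "\<dots> \<ge> (\<Sum>j\<in>UNIV. lam * \<phi> t $ j) - n * lam * C1 * (s - t) - n * Ux s" using F[OF s] by simp
    also have "(\<Sum>j\<in>UNIV. lam * \<phi> t $ j) - n * lam * C1 * (s - t) - n * Ux s = (\<Sum>j\<in>UNIV. lam * \<phi> t $ j - Ux t)"
    proof -
      have "(\<Sum>j\<in>UNIV. lam * \<phi> t $ j - Ux t) = (\<Sum>j\<in>UNIV. lam * \<phi> t $ j) - n * Ux t"
        by (simp add: sum_subtractf n_def)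
      moreover have "n * Ux t = n * lam * C1 * (s - t) + n * Ux s" by (simp add: Ux_def algebra_simps)
      ultimately show ?thesis by simp
    qed
    finally have "a i \<ge> (\<Sum>j\<in>UNIV. lam * \<phi> t $ j - Ux t)" using ai by simp
    then have "\<epsilon> * a i \<ge> \<epsilon> * (\<Sum>j\<in>UNIV. lam * \<phi> t $ j - Ux t)" using eps by (intro mult_left_mono) auto
    then have low: "\<epsilon> * a i \<ge> - K" using bsum by simp
    have Us0: "Ux s \<ge> 0" using s lam C1 by (simp add: Ux_def)
    have UsK: "Ux s \<le> C1 * (1 + T - t)"
    proof -
      have "Ux s \<le> lam * C1 * (1 + T - t)" unfolding Ux_def using s lam C1
        by (intro mult_left_mono) auto
      then show ?thesis using lamC by simp
    qed
    have e1: "\<epsilon> * (lam * \<phi> s $ i) = \<epsilon> * a i + \<epsilon> * Ux s" by (simp add: a_def algebra_simps)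
    have "\<epsilon> * Ux s \<ge> 0" using eps Us0 by simp
    then have lo: "\<epsilon> * (lam * \<phi> s $ i) \<ge> - K" using e1 low by simp
    have "\<epsilon> * a i \<le> 0" using an[of i] eps by (simp add: mult_nonneg_nonpos)
    moreover have "\<epsilon> * Ux s \<le> Ux s" using mult_right_mono[OF eps1 Us0] by simp
    moreover have "C1 * t \<le> C1 * T" using C1 t by (intro mult_left_mono) auto
    moreover have "K = 2 * C1 + 3 * (C1 * T) - 3 * (C1 * t)" by (simp add: K_def algebra_simps)
    moreover have "Ux s \<le> C1 + C1 * T - C1 * t" using UsK by (simp add: algebra_simps)
    ultimately have up: "\<epsilon> * (lam * \<phi> s $ i) \<le> K" using e1 C1 by linarith
    have "\<epsilon> * \<bar>lam * \<phi> s $ i\<bar> = \<bar>\<epsilon> * (lam * \<phi> s $ i)\<bar>" using eps by (simp add: abs_mult)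
    then show ?thesis using lo up by simp
  qed
  have KK: "K \<le> (5 * (T - t) + 4) * C1"
  proof -
    have "C1 * (2 + 3 * (T - t)) \<le> C1 * (5 * (T - t) + 4)" using C1 t by (intro mult_left_mono) auto
    then show ?thesis unfolding K_def by (simp add: mult.commute)
  qed
  show ?thesis
  proof
    fix s assume s: "s \<in> {t<..<T}"
    have fin: "finite (range (\<lambda>i. \<bar>lam * \<phi> s $ i\<bar>))" by simp
    have "Max (range (\<lambda>i. \<bar>lam * \<phi> s $ i\<bar>)) \<in> range (\<lambda>i. \<bar>lam * \<phi> s $ i\<bar>)" by (rule Max_in[OF fin]) simp
    then obtain i where i: "Max (range (\<lambda>i. \<bar>lam * \<phi> s $ i\<bar>)) = \<bar>lam * \<phi> s $ i\<bar>" by blast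
    show "\<epsilon> * (MAX i\<in>UNIV. \<bar>lam * \<phi> s $ i\<bar>) \<le> (5 * (T - t) + 4) * C1"
      using main[OF s, of i] KK i by simp
  qed


qed

end
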